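(* Let $P$ be a finite lattice and $f\in\mathcal{L}_P$. If $s$ is a minimal element of $\mathcal{S}_f=\{s\in\mathcal{L}_P: f+s=1\}$, then $s$ is prime, i.e. $P\setminus\Phi s$ is closed under $\wedge$.
   Context: $P$ is a finite lattice with greatest element $\hat p$. $\mathcal{L}_P$ is the set of maps $f:P\to P$ satisfying (A.1) $a\le f(a)$; (A.2) $a\le b\Rightarrow f(a)\le f(b)$; (A.3) $f(f(a))=f(a)$, ordered pointwise; it is a lattice with join $+$ and greatest element $1:a\mapsto\hat p$. $\Phi f=\{a:f(a)=a\}$; one has $f+s=1$ iff $\Phi f\cap\Phi s=\{\hat p\}$. A map is prime if its set of non-fixed points is closed under $\wedge$. *)

theory Defs
  imports Main
begin

text \<open>The lattice P is a finite type of class lattice with a top element.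
  Closure operators on P (the set L_P), ordered pointwise (HOL's le_fun order).\<close>

definition closure_op :: "('a::{finite,lattice,order_top} \<Rightarrow> 'a) \<Rightarrow> bool" where
  "closure_op f \<longleftrightarrow> (\<forall>a. a \<le> f a) \<and> (\<forall>a b. a \<le> b \<longrightarrow> f a \<le> f b) \<and> (\<forall>a. f (f a) = f a)"

definition LP :: "('a::{finite,lattice,order_top} \<Rightarrow> 'a) set" where
  "LP = {f. closure_op f}"

definition joinL :: "('a::{finite,lattice,order_top} \<Rightarrow> 'a) \<Rightarrow> ('a \<Rightarrow> 'a) \<Rightarrow> ('a \<Rightarrow> 'a)" where
  "joinL f s = (LEAST h. h \<in> LP \<and> f \<le> h \<and> s \<le> h)"

definition oneL :: "'a::{finite,lattice,order_top} \<Rightarrow> 'a" where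
  "oneL = (\<lambda>a. top)"

definition Phi :: "('a \<Rightarrow> 'a) \<Rightarrow> 'a set" where
  "Phi f = {a. f a = a}"

definition Sf :: "('a::{finite,lattice,order_top} \<Rightarrow> 'a) \<Rightarrow> ('a \<Rightarrow> 'a) set" where
  "Sf f = {s \<in> LP. joinL f s = oneL}"

definition prime_map :: "('a::{finite,lattice,order_top} \<Rightarrow> 'a) \<Rightarrow> bool" where
  "prime_map s \<longleftrightarrow> (\<forall>a b. a \<notin> Phi s \<longrightarrow> b \<notin> Phi s \<longrightarrow> inf a b \<notin> Phi s)"

end

theory Submission
  imports Defs
begin

lemma cl_ext: "closure_op f \<Longrightarrow> a \<le> f a" unfolding closure_op_def by auto
lemma cl_mono: "closure_op f \<Longrightarrow> a \<le> b \<Longrightarrow> f a \<le> f b" unfolding closure_op_def by auto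
lemma cl_idem: "closure_op f \<Longrightarrow> f (f a) = f a" unfolding closure_op_def by auto
lemma cl_top: "closure_op f \<Longrightarrow> f top = top" using cl_ext[of f top] by (simp add: top_le)

lemma cl_fix_inf:
  assumes "closure_op f" "f a = a" "f b = b"
  shows "f (inf a b) = inf a b"
proof -
  have "f (inf a b) \<le> f a" "f (inf a b) \<le> f b" using assms cl_mono[OF assms(1)] by (metis inf_le1, metis inf_le2)
  moreover have "inf a b \<le> f (inf a b)" using assms unfolding closure_op_def by auto
  ultimately show ?thesis using assms by (metis antisym le_inf_iff)
qed

definition gJ :: "('a::{finite,lattice,order_top} \<Rightarrow> 'a) \<Rightarrow> ('a \<Rightarrow> 'a) \<Rightarrow> 'a \<Rightarrow> 'a" where
  "gJ f s z = Inf_fin {w. f w = w \<and> s w = w \<and> z \<le> w}"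

lemma gJ_props:
  fixes f s :: "'a::{finite,lattice,order_top} \<Rightarrow> 'a"
  assumes f: "closure_op f" and s: "closure_op s"
  shows "z \<le> gJ f s z" "f (gJ f s z) = gJ f s z" "s (gJ f s z) = gJ f s z"
    "\<And>w. f w = w \<Longrightarrow> s w = w \<Longrightarrow> z \<le> w \<Longrightarrow> gJ f s z \<le> w"
proof -
  let ?A = "{w. f w = w \<and> s w = w \<and> z \<le> w}"
  have fin: "finite ?A" by simp
  have ne: "?A \<noteq> {}"
  proof -
    have "f top = top" "s top = top" using f s cl_top by auto
    then show ?thesis by auto
  qed
  show "z \<le> gJ f s z" unfolding gJ_def using fin ne by (auto intro: Inf_fin.boundedI)
  show lb: "\<And>w. f w = w \<Longrightarrow> s w = w \<Longrightarrow> z \<le> w \<Longrightarrow> gJ f s z \<le> w"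
    unfolding gJ_def using fin by (auto intro: Inf_fin.coboundedI)
  have "f (gJ f s z) \<le> gJ f s z"
    unfolding gJ_def
  proof (rule Inf_fin.boundedI[OF fin ne])
    fix a assume "a \<in> ?A"
    then have "Inf_fin ?A \<le> a" using fin by (auto intro: Inf_fin.coboundedI)
    then have "f (Inf_fin ?A) \<le> f a" by (rule cl_mono[OF f])
    then show "f (Inf_fin ?A) \<le> a" using \<open>a \<in> ?A\<close> by simp
  qed
  moreover have "gJ f s z \<le> f (gJ f s z)" using f unfolding closure_op_def by auto
  ultimately show "f (gJ f s z) = gJ f s z" by (rule antisym)
  have "s (gJ f s z) \<le> gJ f s z"
    unfolding gJ_def
  proof (rule Inf_fin.boundedI[OF fin ne])
    fix a assume "a \<in> ?A"
    then have "Inf_fin ?A \<le> a" using fin by (auto intro: Inf_fin.coboundedI)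
    then have "s (Inf_fin ?A) \<le> s a" by (rule cl_mono[OF s])
    then show "s (Inf_fin ?A) \<le> a" using \<open>a \<in> ?A\<close> by simp
  qed
  moreover have "gJ f s z \<le> s (gJ f s z)" using s unfolding closure_op_def by auto
  ultimately show "s (gJ f s z) = gJ f s z" by (rule antisym)
qed

lemma joinL_eq:
  fixes f s :: "'a::{finite,lattice,order_top} \<Rightarrow> 'a"
  assumes f: "closure_op f" and s: "closure_op s"
  shows "joinL f s = gJ f s"
  unfolding joinL_def
proof (rule Least_equality)
  note G = gJ_props[OF f s]
  have cl: "closure_op (gJ f s)"
    unfolding closure_op_def
  proof (intro conjI allI impI)
    fix a show "a \<le> gJ f s a" using G by auto
  next
    fix a b :: 'a assume "a \<le> b"
    then have "a \<le> gJ f s b" using G(1)[of b] by (rule order_trans)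
    then show "gJ f s a \<le> gJ f s b" using G(4)[of "gJ f s b" a] G(2,3)[of b] by simp
  next
    fix a show "gJ f s (gJ f s a) = gJ f s a"
      using G(1)[of "gJ f s a"] G(2,3)[of a] G(4)[of "gJ f s a" "gJ f s a"] by (auto intro: antisym)
  qed
  have "f \<le> gJ f s" unfolding le_fun_def
  proof
    fix z have "f z \<le> f (gJ f s z)" using f G(1)[of z] unfolding closure_op_def by auto
    then show "f z \<le> gJ f s z" using G(2) by simp
  qed
  moreover have "s \<le> gJ f s" unfolding le_fun_def
  proof
    fix z have "s z \<le> s (gJ f s z)" using s G(1)[of z] unfolding closure_op_def by auto
    then show "s z \<le> gJ f s z" using G(3) by simp
  qed
  ultimately show "gJ f s \<in> LP \<and> f \<le> gJ f s \<and> s \<le> gJ f s" using cl unfolding LP_def by auto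
next
  note G = gJ_props[OF f s]
  fix h assume h: "h \<in> LP \<and> f \<le> h \<and> s \<le> h"
  show "gJ f s \<le> h" unfolding le_fun_def
  proof
    fix z
    have hc: "closure_op h" using h unfolding LP_def by auto
    have "f (h z) \<le> h (h z)" "s (h z) \<le> h (h z)" using h unfolding le_fun_def by auto
    then have "f (h z) \<le> h z" "s (h z) \<le> h z" using hc unfolding closure_op_def by auto
    then have "f (h z) = h z" "s (h z) = h z" using f s unfolding closure_op_def by (auto intro: antisym)
    moreover have "z \<le> h z" using hc unfolding closure_op_def by auto
    ultimately show "gJ f s z \<le> h z" using G(4) by auto
  qed
qed

lemma joinL_one_iff:
  fixes f s :: "'a::{finite,lattice,order_top} \<Rightarrow> 'a"
  assumes f: "closure_op f" and s: "closure_op s"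
  shows "joinL f s = oneL \<longleftrightarrow> (\<forall>u. f u = u \<longrightarrow> s u = u \<longrightarrow> u = top)"
proof
  assume "joinL f s = oneL"
  then have "gJ f s = oneL" using joinL_eq[OF f s] by simp
  then show "\<forall>u. f u = u \<longrightarrow> s u = u \<longrightarrow> u = top"
    using gJ_props(4)[OF f s] unfolding oneL_def by (metis order_refl top_unique)
next
  assume H: "\<forall>u. f u = u \<longrightarrow> s u = u \<longrightarrow> u = top"
  have "gJ f s = oneL" unfolding oneL_def
    using H gJ_props(2,3)[OF f s] by auto
  then show "joinL f s = oneL" using joinL_eq[OF f s] by simp
qed

definition tx :: "('a::{finite,lattice,order_top} \<Rightarrow> 'a) \<Rightarrow> 'a \<Rightarrow> 'a \<Rightarrow> 'a" where
  "tx s x z = (if z \<le> x then inf x (s z) else s z)"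

lemma tx_closure:
  fixes s :: "'a::{finite,lattice,order_top} \<Rightarrow> 'a"
  assumes s: "closure_op s"
  shows "closure_op (tx s x)"
  unfolding closure_op_def
proof (intro conjI allI impI)
  fix a show "a \<le> tx s x a" using s unfolding tx_def closure_op_def by auto
next
  fix a b :: 'a assume ab: "a \<le> b"
  then have "s a \<le> s b" using s unfolding closure_op_def by auto
  show "tx s x a \<le> tx s x b"
  proof (cases "b \<le> x")
    case True
    then have "a \<le> x" using ab by (rule order_trans[rotated])
    then show ?thesis using True \<open>s a \<le> s b\<close> unfolding tx_def by (simp add: inf.coboundedI2 le_infI1)
  next
    case False
    have "tx s x a \<le> s a" unfolding tx_def by simp
    also have "\<dots> \<le> s b" by fact
    finally show ?thesis using False unfolding tx_def by simp
  qed
next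
  fix a
  have sa: "a \<le> s a" "s (s a) = s a" using s unfolding closure_op_def by auto
  show "tx s x (tx s x a) = tx s x a"
  proof (cases "a \<le> x")
    case True
    have "a \<le> inf x (s a)" using True sa by auto
    then have "s a \<le> s (inf x (s a))" using s unfolding closure_op_def by auto
    moreover have "s (inf x (s a)) \<le> s (s a)" using cl_mono[OF s, of "inf x (s a)" "s a"] by simp
    ultimately have "s (inf x (s a)) = s a" using sa by (auto intro: antisym)
    then show ?thesis using True unfolding tx_def by (auto simp: inf_absorb2)
  next
    case False
    then have "\<not> s a \<le> x" using sa by (meson order_trans)
    then show ?thesis using False sa unfolding tx_def by auto
  qed
qed

lemma key:
  fixes f s :: "'a::{finite,lattice,order_top} \<Rightarrow> 'a"
  assumes f: "closure_op f" and s: "closure_op s"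
    and fs: "\<forall>u. f u = u \<longrightarrow> s u = u \<longrightarrow> u = top"
    and mn: "\<forall>t \<in> Sf f. \<not> (t < s)"
    and x: "s x \<noteq> x"
  shows "\<exists>u. f u = u \<and> s u \<noteq> u \<and> u = inf x (s u)"
proof -
  have tc: "closure_op (tx s x)" by (rule tx_closure[OF s])
  have le: "tx s x \<le> s" unfolding le_fun_def tx_def by auto
  have "tx s x x = inf x (s x)" unfolding tx_def by simp
  also have "\<dots> = x" using s unfolding closure_op_def by (simp add: inf_absorb1)
  finally have "tx s x \<noteq> s" using x by metis
  then have "tx s x < s" using le by auto
  then have "tx s x \<notin> Sf f" using mn by auto
  then have "joinL f (tx s x) \<noteq> oneL" using tc unfolding Sf_def LP_def by auto
  then obtain u where u: "f u = u" "tx s x u = u" "u \<noteq> top"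
    using joinL_one_iff[OF f tc] by auto
  show ?thesis
  proof (cases "u \<le> x")
    case True
    then have ux: "u = inf x (s u)" using u(2) unfolding tx_def by simp
    have "s u \<noteq> u" using fs u(1) u(3) by blast
    then show ?thesis using u(1) ux by blast
  next
    case False
    then have "s u = u" using u(2) unfolding tx_def by simp
    then show ?thesis using fs u(1) u(3) by blast
  qed
qed

theorem mainTheorem13:
  fixes f s :: "'a::{finite,lattice,order_top} \<Rightarrow> 'a"
  assumes "f \<in> LP"
    and "s \<in> Sf f"
    and "\<forall>t \<in> Sf f. \<not> (t < s)"
  shows "prime_map s"
  unfolding prime_map_def
proof (intro allI impI)
  have f: "closure_op f" using assms(1) unfolding LP_def by auto
  have s: "closure_op s" and j: "joinL f s = oneL" using assms(2) unfolding Sf_def LP_def by auto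
  have fs: "\<forall>u. f u = u \<longrightarrow> s u = u \<longrightarrow> u = top" using joinL_one_iff[OF f s] j by auto
  fix a b assume a: "a \<notin> Phi s" and b: "b \<notin> Phi s"
  show "inf a b \<notin> Phi s"
  proof
    assume c: "inf a b \<in> Phi s"
    obtain u where u: "f u = u" "s u \<noteq> u" "u = inf a (s u)"
      using key[OF f s fs assms(3)] a unfolding Phi_def by auto
    obtain v where v: "f v = v" "s v \<noteq> v" "v = inf b (s v)"
      using key[OF f s fs assms(3)] b unfolding Phi_def by auto
    have "inf u v = inf (inf a (s u)) (inf b (s v))"
      using arg_cong2[OF u(3) v(3), of inf] .
    also have "\<dots> = inf (inf a b) (inf (s u) (s v))" by (simp add: inf_aci)
    finally have e: "inf u v = inf (inf a b) (inf (s u) (s v))" .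
    have ssu: "s (s u) = s u" "s (s v) = s v" using s unfolding closure_op_def by auto
    have "s (inf (s u) (s v)) = inf (s u) (s v)" using cl_fix_inf[OF s ssu] .
    then have "s (inf u v) = inf u v" unfolding e using cl_fix_inf[OF s] c unfolding Phi_def by auto
    moreover have "f (inf u v) = inf u v" using cl_fix_inf[OF f u(1) v(1)] .
    ultimately have "inf u v = top" using fs by auto
    then have "u = top" by (metis inf.orderE top_unique inf_le1)
    moreover have "s top = top" using s cl_top by auto
    ultimately show False using u(2) by metis
  qed
qed

end
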